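(* Let $H_{KR}=[I_{10}\ M_{KR}]$ be the $10\times51$ binary matrix whose last 41 columns are, in order, the hexadecimal columns 1B6, 193, 1CC, 187, 1F6, F7, 16E, 140, 3C, 296, 22F, 303, 381, 365, 11D, 1A3, 274, 2F2, 254, 56, F, 41, 357, 208, 34, 329, 28D, 31D, 3D5, 129, 3D7, B7, 3EC, 2E2, 23C, AD, 34E, 155, 2E6, 371, D4 (10-bit binary, most significant bit on top). Then every vector of $\mathbb{F}_2^{10}$ equals the sum of three (distinct) columns of $H_{KR}$.
   Context: $I_{10}$ denotes the $10\times10$ identity matrix whose leftmost column is $(1,0,\dots,0)^T$. *)

theory Defs
  imports Main "HOL-Library.Z2"
begin

definition MKR_hex :: "nat list" where
  "MKR_hex = [0x1B6, 0x193, 0x1CC, 0x187, 0x1F6, 0xF7, 0x16E, 0x140, 0x3C, 0x296,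
              0x22F, 0x303, 0x381, 0x365, 0x11D, 0x1A3, 0x274, 0x2F2, 0x254, 0x56,
              0xF, 0x41, 0x357, 0x208, 0x34, 0x329, 0x28D, 0x31D, 0x3D5, 0x129,
              0x3D7, 0xB7, 0x3EC, 0x2E2, 0x23C, 0xAD, 0x34E, 0x155, 0x2E6, 0x371, 0xD4]"

text \<open>Entry of H_KR = [I_10 M_KR] over F_2 (type bit) in row i (0-based, 0 = top row,
  i < 10) and column j (0-based, j < 51). Row i of a hex column h is binary digit 9 - i of h.\<close>
definition H_KR :: "nat \<Rightarrow> nat \<Rightarrow> bit" where
  "H_KR i j = (if j < 10 then (if i = j then 1 else 0)
               else of_nat ((MKR_hex ! (j - 10) div 2 ^ (9 - i)) mod 2))"

end

theory Submission
  imports Defs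
begin

definition CL :: "bit list list" where "CL = [[1,0,0,0,0,0,0,0,0,0], [0,1,0,0,0,0,0,0,0,0], [0,0,1,0,0,0,0,0,0,0], [0,0,0,1,0,0,0,0,0,0], [0,0,0,0,1,0,0,0,0,0], [0,0,0,0,0,1,0,0,0,0], [0,0,0,0,0,0,1,0,0,0], [0,0,0,0,0,0,0,1,0,0], [0,0,0,0,0,0,0,0,1,0], [0,0,0,0,0,0,0,0,0,1], [0,1,1,0,1,1,0,1,1,0], [0,1,1,0,0,1,0,0,1,1], [0,1,1,1,0,0,1,1,0,0], [0,1,1,0,0,0,0,1,1,1], [0,1,1,1,1,1,0,1,1,0], [0,0,1,1,1,1,0,1,1,1], [0,1,0,1,1,0,1,1,1,0], [0,1,0,1,0,0,0,0,0,0], [0,0,0,0,1,1,1,1,0,0], [1,0,1,0,0,1,0,1,1,0], [1,0,0,0,1,0,1,1,1,1], [1,1,0,0,0,0,0,0,1,1], [1,1,1,0,0,0,0,0,0,1], [1,1,0,1,1,0,0,1,0,1], [0,1,0,0,0,1,1,1,0,1], [0,1,1,0,1,0,0,0,1,1], [1,0,0,1,1,1,0,1,0,0], [1,0,1,1,1,1,0,0,1,0], [1,0,0,1,0,1,0,1,0,0], [0,0,0,1,0,1,0,1,1,0], [0,0,0,0,0,0,1,1,1,1], [0,0,0,1,0,0,0,0,0,1], [1,1,0,1,0,1,0,1,1,1], [1,0,0,0,0,0,1,0,0,0], [0,0,0,0,1,1,0,1,0,0], [1,1,0,0,1,0,1,0,0,1], [1,0,1,0,0,0,1,1,0,1], [1,1,0,0,0,1,1,1,0,1],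 [1,1,1,1,0,1,0,1,0,1], [0,1,0,0,1,0,1,0,0,1], [1,1,1,1,0,1,0,1,1,1], [0,0,1,0,1,1,0,1,1,1], [1,1,1,1,1,0,1,1,0,0], [1,0,1,1,1,0,0,0,1,0], [1,0,0,0,1,1,1,1,0,0], [0,0,1,0,1,0,1,1,0,1], [1,1,0,1,0,0,1,1,1,0], [0,1,0,1,0,1,0,1,0,1], [1,0,1,1,1,0,0,1,1,0], [1,1,0,1,1,1,0,0,0,1], [0,0,1,1,0,1,0,1,0,0]]"
lemma CL_0: "CL ! 0 = [1,0,0,0,0,0,0,0,0,0]" by (simp add: CL_def)
lemma CL_1: "CL ! 1 = [0,1,0,0,0,0,0,0,0,0]" by (simp add: CL_def)
lemma CL_2: "CL ! 2 = [0,0,1,0,0,0,0,0,0,0]" by (simp add: CL_def)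
lemma CL_3: "CL ! 3 = [0,0,0,1,0,0,0,0,0,0]" by (simp add: CL_def)
lemma CL_4: "CL ! 4 = [0,0,0,0,1,0,0,0,0,0]" by (simp add: CL_def)
lemma CL_5: "CL ! 5 = [0,0,0,0,0,1,0,0,0,0]" by (simp add: CL_def)
lemma CL_6: "CL ! 6 = [0,0,0,0,0,0,1,0,0,0]" by (simp add: CL_def)
lemma CL_7: "CL ! 7 = [0,0,0,0,0,0,0,1,0,0]" by (simp add: CL_def)
lemma CL_8: "CL ! 8 = [0,0,0,0,0,0,0,0,1,0]" by (simp add: CL_def)
lemma CL_9: "CL ! 9 = [0,0,0,0,0,0,0,0,0,1]" by (simp add: CL_def)
lemma CL_10: "CL ! 10 = [0,1,1,0,1,1,0,1,1,0]" by (simp add: CL_def)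
lemma CL_11: "CL ! 11 = [0,1,1,0,0,1,0,0,1,1]" by (simp add: CL_def)
lemma CL_12: "CL ! 12 = [0,1,1,1,0,0,1,1,0,0]" by (simp add: CL_def)
lemma CL_13: "CL ! 13 = [0,1,1,0,0,0,0,1,1,1]" by (simp add: CL_def)
lemma CL_14: "CL ! 14 = [0,1,1,1,1,1,0,1,1,0]" by (simp add: CL_def)
lemma CL_15: "CL ! 15 = [0,0,1,1,1,1,0,1,1,1]" by (simp add: CL_def)
lemma CL_16: "CL ! 16 = [0,1,0,1,1,0,1,1,1,0]" by (simp add: CL_def)
lemma CL_17: "CL ! 17 = [0,1,0,1,0,0,0,0,0,0]" by (simp add: CL_def)
lemma CL_18: "CL ! 18 = [0,0,0,0,1,1,1,1,0,0]" by (simp add: CL_def)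
lemma CL_19: "CL ! 19 = [1,0,1,0,0,1,0,1,1,0]" by (simp add: CL_def)
lemma CL_20: "CL ! 20 = [1,0,0,0,1,0,1,1,1,1]" by (simp add: CL_def)
lemma CL_21: "CL ! 21 = [1,1,0,0,0,0,0,0,1,1]" by (simp add: CL_def)
lemma CL_22: "CL ! 22 = [1,1,1,0,0,0,0,0,0,1]" by (simp add: CL_def)
lemma CL_23: "CL ! 23 = [1,1,0,1,1,0,0,1,0,1]" by (simp add: CL_def)
lemma CL_24: "CL ! 24 = [0,1,0,0,0,1,1,1,0,1]" by (simp add: CL_def)
lemma CL_25: "CL ! 25 = [0,1,1,0,1,0,0,0,1,1]" by (simp add: CL_def)
lemma CL_26: "CL ! 26 = [1,0,0,1,1,1,0,1,0,0]" by (simp add: CL_def)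
lemma CL_27: "CL ! 27 = [1,0,1,1,1,1,0,0,1,0]" by (simp add: CL_def)
lemma CL_28: "CL ! 28 = [1,0,0,1,0,1,0,1,0,0]" by (simp add: CL_def)
lemma CL_29: "CL ! 29 = [0,0,0,1,0,1,0,1,1,0]" by (simp add: CL_def)
lemma CL_30: "CL ! 30 = [0,0,0,0,0,0,1,1,1,1]" by (simp add: CL_def)
lemma CL_31: "CL ! 31 = [0,0,0,1,0,0,0,0,0,1]" by (simp add: CL_def)
lemma CL_32: "CL ! 32 = [1,1,0,1,0,1,0,1,1,1]" by (simp add: CL_def)
lemma CL_33: "CL ! 33 = [1,0,0,0,0,0,1,0,0,0]" by (simp add: CL_def)
lemma CL_34: "CL ! 34 = [0,0,0,0,1,1,0,1,0,0]" by (simp add: CL_def)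
lemma CL_35: "CL ! 35 = [1,1,0,0,1,0,1,0,0,1]" by (simp add: CL_def)
lemma CL_36: "CL ! 36 = [1,0,1,0,0,0,1,1,0,1]" by (simp add: CL_def)
lemma CL_37: "CL ! 37 = [1,1,0,0,0,1,1,1,0,1]" by (simp add: CL_def)
lemma CL_38: "CL ! 38 = [1,1,1,1,0,1,0,1,0,1]" by (simp add: CL_def)
lemma CL_39: "CL ! 39 = [0,1,0,0,1,0,1,0,0,1]" by (simp add: CL_def)
lemma CL_40: "CL ! 40 = [1,1,1,1,0,1,0,1,1,1]" by (simp add: CL_def)
lemma CL_41: "CL ! 41 = [0,0,1,0,1,1,0,1,1,1]" by (simp add: CL_def)
lemma CL_42: "CL ! 42 = [1,1,1,1,1,0,1,1,0,0]" by (simp add: CL_def)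
lemma CL_43: "CL ! 43 = [1,0,1,1,1,0,0,0,1,0]" by (simp add: CL_def)
lemma CL_44: "CL ! 44 = [1,0,0,0,1,1,1,1,0,0]" by (simp add: CL_def)
lemma CL_45: "CL ! 45 = [0,0,1,0,1,0,1,1,0,1]" by (simp add: CL_def)
lemma CL_46: "CL ! 46 = [1,1,0,1,0,0,1,1,1,0]" by (simp add: CL_def)
lemma CL_47: "CL ! 47 = [0,1,0,1,0,1,0,1,0,1]" by (simp add: CL_def)
lemma CL_48: "CL ! 48 = [1,0,1,1,1,0,0,1,1,0]" by (simp add: CL_def)
lemma CL_49: "CL ! 49 = [1,1,0,1,1,1,0,0,0,1]" by (simp add: CL_def)
lemma CL_50: "CL ! 50 = [0,0,1,1,0,1,0,1,0,0]" by (simp add: CL_def)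
lemma CL_1s: "CL ! Suc 0 = [0,1,0,0,0,0,0,0,0,0]" by (simp add: CL_def)
lemmas CL_nths = CL_1s CL_0 CL_1 CL_2 CL_3 CL_4 CL_5 CL_6 CL_7 CL_8 CL_9 CL_10 CL_11 CL_12 CL_13 CL_14 CL_15 CL_16 CL_17 CL_18 CL_19 CL_20 CL_21 CL_22 CL_23 CL_24 CL_25 CL_26 CL_27 CL_28 CL_29 CL_30 CL_31 CL_32 CL_33 CL_34 CL_35 CL_36 CL_37 CL_38 CL_39 CL_40 CL_41 CL_42 CL_43 CL_44 CL_45 CL_46 CL_47 CL_48 CL_49 CL_50
definition WT :: "(nat*nat*nat) list" where "WT = [(0,6,33), (2,28,50), (9,10,41), (0,3,17), (0,28,50), (0,32,40), (0,9,22), (0,1,2), (0,26,34), (0,1,17), (1,9,31), (0,1,3), (0,19,29), (0,2,3), (0,22,31), (0,2,17), (0,12,42), (0,26,28), (0,10,19), (0,1,4), (0,21,25), (0,2,4), (0,15,32), (0,14,29), (0,28,34), (0,3,4), (0,14,19), (0,4,17), (0,8,43), (0,34,50), (0,32,41), (0,10,29), (4,7,34), (0,27,43), (0,14,48), (0,1,5), (0,11,21), (0,2,5), (0,24,36), (0,36,37), (0,7,28), (0,3,5), (0,10,48), (0,5,17), (0,13,32), (0,7,50), (0,18,42), (0,42,44), (0,23,47), (0,4,5), (0,31,49), (0,13,41), (0,29,48), (0,23,38), (0,37,45), (0,24,45), (0,7,26), (0,19,48), (0,9,49), (0,13,15), (0,8,27), (0,22,49), (0,12,44), (0,12,18), (0,34,44),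 (0,18,34), (0,1,33), (0,1,6), (0,2,33), (0,2,6), (0,16,48), (0,13,30), (0,3,33), (0,3,6), (0,17,33), (0,6,17), (0,24,38), (0,37,38), (0,23,45), (0,7,12), (0,4,33), (0,4,6), (0,9,35), (0,9,39), (0,22,39), (0,22,35), (0,13,20), (0,46,48), (0,18,28), (0,28,44), (0,31,35), (0,31,39), (0,44,50), (0,18,50), (0,7,42), (0,23,36), (0,5,33), (0,5,6), (0,29,46), (0,12,50), (0,20,41), (0,14,16), (0,12,28), (0,26,42), (0,39,49), (0,35,49), (0,30,32), (0,36,38), (0,15,20), (0,10,16), (0,30,40), (0,19,46), (0,7,44), (0,7,18), (0,42,50), (0,16,29), (0,14,46), (0,30,41), (0,12,26), (0,28,42), (0,23,24), (0,23,37), (0,38,45), (0,20,32), (0,10,46), (0,15,30), (0,16,19), (0,12,34), (4,5,34), (0,43,48), (0,14,27), (0,1,7), (0,13,21), (0,2,7), (0,35,45), (0,39,45), (0,5,28), (0,3,7), (0,10,27), (0,7,17), (0,11,32), (0,5,50), (0,12,33), (0,6,12), (0,47,49), (0,4,7), (0,23,31), (0,11,41), (0,27,29), (0,38,49), (0,36,39), (0,35,36), (0,5,26), (0,19,27), (0,9,23), (0,11,15), (0,8,48), (0,22,23), (0,6,42), (0,33,42), (0,3,28), (0,4,34), (0,14,43), (0,25,41), (0,8,19), (0,3,50), (0,31,38), (0,17,50), (0,4,26), (0,2,50), (0,1,28), (0,9,47), (0,2,28), (0,21,40), (0,9,38), (0,1,50), (0,3,26), (0,6,18), (0,17,26), (0,1,34),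 (0,29,43), (0,2,34), (0,21,41), (0,8,10), (0,4,28), (0,3,34), (0,1,26), (0,17,34), (0,2,26), (0,4,50), (0,15,21), (0,8,14), (0,7,33), (0,6,7), (0,21,30), (0,22,36), (0,9,36), (0,12,17), (0,16,43), (0,3,12), (0,23,39), (0,23,35), (0,8,46), (0,2,12), (0,31,36), (0,1,12), (0,4,42), (1,31,36), (0,5,44), (0,5,18), (0,22,45), (0,20,21), (0,17,42), (0,9,45), (0,3,42), (0,25,30), (0,24,49), (0,37,49), (0,2,42), (0,8,16), (0,1,42), (0,31,45), (1,31,45), (0,4,12), (0,4,44), (0,4,18), (0,9,37), (0,9,24), (0,22,24), (0,22,37), (0,16,27), (0,11,30), (0,6,28), (0,28,33), (0,31,37), (0,24,31), (0,33,50), (0,6,50), (0,45,49), (0,5,12), (0,33,34), (0,6,34), (0,1,44), (0,1,18), (0,2,44), (0,2,18), (0,11,20), (0,27,46), (0,3,44), (0,3,18), (0,17,44), (0,17,18), (0,38,39), (0,35,38), (0,5,42), (0,36,49), (0,28,29), (0,38,40), (0,9,21), (0,1,8), (0,12,46), (0,2,8), (0,14,26), (0,10,34), (0,19,50), (0,3,8), (0,21,31), (0,8,17), (0,4,43), (0,19,28), (0,10,26), (0,14,34), (0,22,25), (0,4,8), (0,15,38), (0,14,50), (0,3,43), (0,12,16), (0,14,28), (0,9,25), (0,2,43), (0,29,34), (0,38,41), (0,10,50), (0,5,27), (0,19,26), (0,1,43), (0,25,31), (0,11,22), (0,5,8), (0,30,37), (0,24,30), (0,7,19), (0,26,48), (0,15,23),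 (0,9,11), (0,13,38), (0,7,29), (0,16,44), (0,16,18), (0,4,27), (0,13,47), (0,23,41), (0,11,31), (0,48,50), (0,23,32), (0,20,24), (0,20,37), (0,3,27), (0,23,40), (0,17,27), (0,7,10), (0,2,27), (0,21,49), (0,18,46), (0,44,46), (0,5,43), (4,25,49), (0,1,27), (0,7,14), (0,8,33), (0,6,8), (0,13,36), (0,42,48), (0,25,35), (0,25,39), (0,10,44), (0,10,18), (0,24,32), (0,32,37), (0,7,46), (0,20,23), (0,24,40), (0,37,40), (0,14,44), (0,14,18), (0,21,39), (0,21,35), (0,12,48), (0,13,45), (0,18,19), (0,19,44), (0,37,41), (0,24,41), (0,29,44), (0,18,29), (0,23,30), (0,7,16), (0,6,43), (0,33,43), (0,15,37), (0,15,24), (0,14,42), (0,41,45), (0,16,26), (0,28,46), (0,13,37), (0,13,24), (0,46,50), (0,12,29), (0,10,42), (0,15,45), (0,12,19), (0,16,34), (0,18,48), (0,44,48), (0,30,38), (0,32,36), (0,36,41), (0,12,14), (0,16,28), (0,26,46), (0,11,35), (0,11,39), (0,29,42), (0,16,50), (0,15,36), (0,10,12), (0,20,47), (0,19,42), (0,6,27), (0,27,33), (0,32,45), (0,20,38), (0,13,22), (0,7,8), (0,20,39), (0,20,35), (0,5,19), (0,26,27), (0,15,49), (0,9,13), (0,11,38), (0,5,29), (0,6,46), (0,33,46), (0,4,48), (0,11,47), (0,41,49), (0,13,31), (0,27,50), (0,32,49), (0,30,35), (0,30,39), (0,3,48), (0,27,28), (0,17,48), (0,5,10), (0,2,48), (0,21,23),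 (0,16,33), (0,6,16), (0,7,43), (4,23,25), (0,1,48), (0,5,14), (0,2,19), (0,3,29), (0,31,32), (0,17,29), (1,4,10), (0,26,43), (0,1,19), (0,4,10), (0,8,28), (0,22,40), (0,9,32), (0,1,29), (0,3,19), (0,2,29), (0,9,40), (0,4,14), (0,43,50), (0,8,34), (0,22,41), (0,2,10), (0,4,19), (0,1,10), (1,9,41), (0,3,14), (0,8,26), (0,4,29), (0,15,22), (0,2,14), (0,5,48), (0,1,14), (1,9,15), (0,3,10), (0,17,46), (0,9,30), (0,3,46), (0,25,45), (0,11,37), (0,11,24), (0,22,30), (0,21,36), (0,1,46), (0,30,31), (1,30,31), (0,4,16), (0,18,27), (0,27,44), (0,2,46), (0,8,12), (0,9,20), (0,16,17), (0,12,43), (0,3,16), (0,13,35), (0,13,39), (0,21,45), (0,20,22), (0,20,31), (0,1,16), (0,4,46), (1,20,31), (0,6,48), (0,33,48), (0,8,42), (0,2,16), (0,21,24), (0,21,37), (0,11,36), (0,27,42), (0,6,19), (0,19,33), (0,35,41), (0,39,41), (0,29,33), (0,6,29), (0,5,46), (0,20,49), (0,18,43), (0,43,44), (0,15,35), (0,15,39), (0,8,44), (0,8,18), (0,12,27), (0,11,45), (0,25,37), (0,24,25), (0,10,33), (0,6,10), (0,32,39), (0,32,35), (0,30,49), (0,5,16), (0,39,40), (0,35,40), (0,14,33), (0,6,14), (1,10,41), (0,3,31), (0,2,22), (0,1,9), (0,1,22), (0,2,9), (0,29,40), (0,28,38), (1,9,17), (0,3,9), (0,12,36), (0,1,31), (0,17,22),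 (0,2,31), (0,3,22), (0,19,32), (0,14,40), (0,4,9), (0,6,35), (0,6,39), (0,14,32), (0,15,29), (0,4,22), (0,8,25), (0,10,40), (0,4,31), (0,5,49), (0,12,45), (0,10,32), (0,29,41), (0,34,38), (0,21,43), (0,15,48), (0,5,9), (0,13,19), (0,23,26), (0,44,45), (0,18,45), (0,5,22), (0,8,11), (0,41,48), (0,5,31), (0,4,49), (0,7,47), (0,12,37), (0,12,24), (0,7,38), (0,13,29), (0,17,49), (0,10,13), (0,3,49), (0,23,28), (0,18,36), (0,36,44), (0,23,50), (0,32,48), (0,1,49), (0,13,14), (0,11,43), (4,23,34), (0,24,42), (0,37,42), (0,2,49), (0,21,27), (0,9,33), (0,6,9), (0,4,35), (0,4,39), (0,7,36), (0,23,42), (0,6,22), (0,22,33), (0,31,33), (0,6,31), (0,24,28), (0,28,37), (0,13,46), (0,20,48), (0,37,50), (0,24,50), (0,1,35), (0,1,39), (0,34,37), (0,24,34), (0,12,23), (0,7,45), (0,2,35), (0,2,39), (0,17,35), (0,17,39), (0,3,35), (0,3,39), (0,30,48), (0,13,16), (0,18,38), (0,38,44), (0,12,38), (0,32,46), (0,7,37), (0,7,24), (0,19,30), (0,12,47), (0,10,20), (0,15,16), (0,36,50), (0,29,30), (0,18,23), (0,23,44), (0,26,45), (0,28,36), (0,14,20), (0,16,41), (0,16,32), (0,38,42), (0,5,35), (0,5,39), (0,16,40), (0,19,20), (0,15,46), (0,10,30), (0,20,29), (0,45,50), (0,6,49), (0,33,49), (0,28,45), (0,26,36), (0,41,46), (0,14,30),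 (0,15,27), (0,7,9), (0,11,19), (0,26,49), (0,6,36), (0,33,36), (0,7,22), (0,8,13), (0,27,41), (0,7,31), (0,4,23), (0,5,47), (0,39,42), (0,35,42), (0,5,38), (0,11,29), (0,17,23), (0,10,11), (0,3,23), (0,27,40), (0,33,45), (0,6,45), (0,49,50), (0,27,32), (0,1,23), (0,11,14), (0,13,43), (4,25,48), (0,12,35), (0,12,39), (0,2,23), (0,21,48), (0,15,43), (0,10,25), (0,6,37), (0,3,47), (0,17,38), (0,31,50), (0,3,38), (0,19,21), (0,9,28), (0,1,47), (0,2,38), (1,9,28), (0,1,38), (0,9,50), (0,8,40), (0,2,47), (0,26,31), (0,9,34), (0,19,25), (0,40,43), (0,10,21), (0,8,41), (0,22,34), (0,32,43), (0,9,26), (0,31,34), (0,5,23), (0,4,47), (0,14,21), (0,8,15), (0,4,38), (0,22,26), (0,2,36), (0,8,30), (0,5,37), (0,5,24), (1,12,31), (0,4,45), (0,1,36), (0,12,31), (0,12,22), (0,21,46), (0,18,49), (0,44,49), (0,3,36), (0,16,25), (0,17,36), (0,9,12), (0,8,20), (0,2,45), (0,7,35), (0,7,39), (0,4,36), (1,31,42), (0,31,42), (0,1,45), (0,16,21), (0,22,42), (0,6,23), (0,23,33), (0,25,46), (0,3,45), (0,9,42), (0,17,45), (0,1,37), (0,1,24), (0,34,35), (0,34,39), (0,5,36), (0,42,49), (0,2,37), (0,2,24), (0,17,37), (0,17,24), (0,3,37), (0,3,24), (0,11,46), (0,20,27), (0,6,38), (0,33,38), (0,9,44), (0,9,18), (0,4,37),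 (0,4,24), (0,12,49), (0,5,45), (0,18,22), (0,22,44), (0,31,44), (0,18,31), (0,28,39), (0,28,35), (0,27,30), (0,11,16), (0,35,50), (0,39,50), (0,1,21), (0,8,9), (0,40,50), (0,28,32), (0,15,26), (0,34,41), (0,2,21), (0,4,25), (0,17,21), (0,8,31), (0,3,21), (0,19,38), (0,26,41), (0,15,34), (0,19,47), (0,12,30), (0,14,38), (0,15,50), (0,4,21), (0,2,25), (0,15,28), (0,1,25), (1,14,47), (0,26,40), (0,10,38), (0,41,50), (0,32,34), (0,22,43), (0,9,43), (0,10,47), (0,12,20), (0,3,25), (0,18,20), (0,20,44), (0,5,21), (0,2,11), (0,14,23), (0,1,11), (4,5,25), (0,43,49), (0,24,46), (0,37,46), (0,7,32), (0,13,50), (0,10,23), (0,11,17), (0,7,40), (0,3,11), (0,30,44), (0,18,30), (0,23,29), (0,38,48), (0,27,31), (0,7,41), (0,47,48), (0,4,11), (0,16,37), (0,16,24), (0,8,49), (0,22,27), (0,9,27), (0,7,15), (0,13,26), (0,19,23), (0,16,23), (0,7,30), (0,6,21), (0,21,33), (0,41,44), (0,18,41), (0,19,24), (0,19,37), (0,45,48), (0,12,13), (0,29,37), (0,24,29), (0,15,44), (0,15,18), (0,39,43), (0,35,43), (0,7,20), (0,23,46), (0,8,35), (0,8,39), (0,10,37), (0,10,24), (0,25,33), (0,6,25), (0,13,42), (0,36,48), (0,18,32), (0,32,44), (0,14,37), (0,14,24), (0,18,40), (0,40,44), (0,12,40), (0,19,36), (0,15,42), (0,10,45), (0,12,32), (0,38,46),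 (0,11,33), (0,6,11), (0,28,30), (0,20,26), (0,41,42), (0,14,45), (0,29,36), (0,30,50), (0,27,39), (0,27,35), (0,19,45), (0,16,47), (0,10,36), (0,12,15), (0,16,38), (0,32,42), (0,13,44), (0,13,18), (0,26,30), (0,20,28), (0,14,36), (0,12,41), (0,20,50), (0,29,45), (0,24,48), (0,37,48), (0,30,33), (0,6,30), (0,7,21), (0,2,13), (0,14,49), (0,1,13), (4,7,25), (0,23,43), (0,16,35), (0,16,39), (0,5,32), (0,11,50), (0,10,49), (0,13,17), (0,5,40), (0,3,13), (0,6,20), (0,20,33), (0,29,49), (0,27,38), (0,31,48), (0,5,41), (0,27,47), (0,4,13), (0,39,46), (0,35,46), (0,8,23), (0,22,48), (0,9,48), (0,5,15), (0,11,26), (0,19,49), (0,17,32), (0,29,31), (0,3,32), (0,19,22), (0,9,19), (0,4,41), (0,3,40), (0,5,13), (0,1,32), (0,9,29), (0,2,40), (0,8,47), (0,1,40), (0,4,15), (0,2,32), (1,19,31), (0,10,22), (0,2,41), (0,21,34), (0,38,43), (1,9,10), (0,3,15), (0,43,47), (0,1,41), (0,14,22), (0,2,15), (0,4,32), (0,21,26), (1,9,14), (0,3,41), (0,4,40), (0,1,15), (0,4,20), (1,31,46), (0,31,46), (0,1,30), (0,8,36), (0,2,30), (0,13,33), (0,6,13), (0,25,42), (0,3,30), (0,9,46), (0,17,30), (0,12,21), (0,22,46), (0,39,48), (0,35,48), (1,16,31), (0,4,30), (0,1,20), (0,16,31), (0,2,20), (0,8,45), (0,11,44), (0,11,18), (0,3,20),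 (0,12,25), (0,17,20), (0,9,16), (0,16,22), (0,21,42), (0,24,27), (0,27,37), (0,16,49), (0,5,30), (0,8,37), (0,8,24), (0,10,35), (0,10,39), (0,25,44), (0,18,25), (0,27,45), (0,11,12), (0,6,32), (0,32,33), (0,14,35), (0,14,39), (0,6,40), (0,33,40), (0,5,20), (0,46,49), (0,18,21), (0,21,44), (0,33,41), (0,6,41), (0,19,39), (0,19,35), (0,11,42), (0,27,36), (0,29,35), (0,29,39), (0,15,33), (0,6,15), (0,24,43), (0,37,43)]"
definition s3 :: "bit list \<Rightarrow> bit list \<Rightarrow> bit list \<Rightarrow> bit list" where
  "s3 x y z = map (\<lambda>((p,q),r). p+q+r) (zip (zip x y) z)"
definition okt :: "bit list \<Rightarrow> nat \<times> nat \<times> nat \<Rightarrow> bool" where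
  "okt xs t = (case t of (a,b,c) \<Rightarrow> a < 51 \<and> b < 51 \<and> c < 51 \<and> a \<noteq> b \<and> a \<noteq> c \<and> b \<noteq> c \<and>
      xs = s3 (CL!a) (CL!b) (CL!c))"
lemma nl10: "List.n_lists 10 xs = List.n_lists (Suc (Suc (Suc (Suc (Suc (Suc (Suc (Suc (Suc (Suc 0)))))))))) xs"
  by (simp add: numeral_eq_Suc)
lemma table_ok: "list_all2 okt (List.n_lists 10 [0,1]) WT"
  unfolding nl10 by (simp add: CL_nths WT_def okt_def s3_def)

lemma CL_H: "list_all (\<lambda>j. list_all (\<lambda>i. H_KR i j = CL ! j ! i) [0..<10]) [0..<51]"
  by (simp add: CL_def H_KR_def MKR_hex_def upt_rec)

lemma CL_H': "j < 51 \<Longrightarrow> i < 10 \<Longrightarrow> H_KR i j = CL ! j ! i"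
  using CL_H by (simp add: list_all_iff)

lemma CL_len: "j < 51 \<Longrightarrow> length (CL ! j) = 10"
  using CL_H by (simp add: list_all_iff) (simp add: CL_def nth_Cons')

lemma bit_cases: "(x::bit) \<in> set [0,1]"
  by (cases x) auto

theorem lemma7p4:
  fixes v :: "nat \<Rightarrow> bit"
  shows "\<exists>a b c. a < 51 \<and> b < 51 \<and> c < 51 \<and> a \<noteq> b \<and> a \<noteq> c \<and> b \<noteq> c \<and>
           (\<forall>i<10. v i = H_KR i a + H_KR i b + H_KR i c)"
proof -
  let ?xs = "map v [0..<10]"
  have "?xs \<in> set (List.n_lists 10 [0,1])"
    unfolding set_n_lists using bit_cases by auto
  then obtain k where k: "k < length (List.n_lists 10 [0::bit,1])" "List.n_lists 10 [0,1] ! k = ?xs"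
    by (metis in_set_conv_nth)
  have "okt ?xs (WT ! k)"
    using table_ok k by (metis list_all2_nthD)
  then obtain a b c where "WT ! k = (a,b,c)" and ok: "okt ?xs (a,b,c)"
    by (metis prod_cases3)
  then have d: "a < 51" "b < 51" "c < 51" "a \<noteq> b" "a \<noteq> c" "b \<noteq> c"
    and e: "?xs = s3 (CL!a) (CL!b) (CL!c)"
    unfolding okt_def by auto
  have "\<forall>i<10. v i = H_KR i a + H_KR i b + H_KR i c"
  proof (intro allI impI)
    fix i :: nat assume i: "i < 10"
    have "v i = ?xs ! i" using i by simp
    also have "\<dots> = CL!a!i + CL!b!i + CL!c!i"
      unfolding e s3_def using i d by (simp add: CL_len)
    finally show "v i = H_KR i a + H_KR i b + H_KR i c"
      using i d by (simp add: CL_H')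
  qed
  then show ?thesis using d by blast
qed

end
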